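(* Let $X$ be a non-trivial separated locally convex space with topology $\sigma(X,X^* )$, let $T$ be an arbitrary index set and let $f,g,h_t:X\to\overline{\mathbb{R}}$ ($t\in T$) be proper convex functions. Let $A=\{x\in X: h_t(x)\le 0\ \text{for all } t\in T\}$ and consider $$(P)\qquad \inf_{x\in A}\{f(x)-g(x)\},\qquad (\overline{D}_L)\qquad \sup_{\lambda\in\mathbb{R}^{(T)}_+}\ \inf_{(u^*,v^*,\gamma)\in W}\{g^c(u^*,v^*,\gamma)-(f+\lambda h)^c(u^*,v^*,\gamma)\}.$$ If $(P)$ is solvable and has an optimal solution $x_0$ with $\partial_c g(x_0)\neq\emptyset$, then weak duality holds for $(P)$–$(\overline{D}_L)$, i.e. $v(P)\ge v(\overline{D}_L)$.
   Context: $X^*$ is the topological dual of $X$, $\langle x,x^*\rangle$ the pairing, and $W:=X^*\times X^*\times\mathbb{R}$. The coupling function $c:X\times W\to\overline{\mathbb{R}}$ is $c(x,(x^*,y^*,\alpha))=\langle x,x^*\rangle$ if $\langle x,y^*\rangle<\alpha$ and $+\infty$ otherwise. For $\varphi:X\to\overline{\mathbb{R}}$, $\varphi^c(w):=\sup_{x\in X}\{c(x,w)-\varphi(x)\}$ ($w\in W$), with the convention $(+\infty)+(-\infty)=(-\infty)+(+\infty)=(+\infty)-(+\infty)=(-\infty)-(-\infty)=-\infty$ (also used in the dual objective). The c-subdifferential of $g$ at $x_0$ is $\partial_c g(x_0):=\{(x^*,y^*,\alpha)\in W:\ \langle x_0,y^*\rangle<\alpha,\ g(x)-g(x_0)\ge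 c(x,(x^*,y^*,\alpha))-c(x_0,(x^*,y^*,\alpha))\ \text{for all } x\in X\}$. $\mathbb{R}^{(T)}_+$ is the set of families $\lambda=(\lambda_t)_{t\in T}$ with $\lambda_t\ge0$ and only finitely many $\lambda_t\neq0$, and $\lambda h:=\sum_{t:\lambda_t\ne0}\lambda_t h_t$. By convention $f(x)-g(x)=+\infty$ whenever $x\notin\operatorname{dom} f$. $v(\cdot)$ denotes optimal value; $(P)$ is solvable if its infimum is attained. *)

theory Defs
  imports Complex_Main "HOL-Library.Extended_Real"
begin

text \<open>Subtraction on extended reals with the paper's convention
  (+inf)-(+inf) = (-inf)-(-inf) = -inf.\<close>
definition esub :: "ereal \<Rightarrow> ereal \<Rightarrow> ereal" where
  "esub a b = (if (a = \<infinity> \<and> b = \<infinity>) \<or> (a = -\<infinity> \<and> b = -\<infinity>) then -\<infinity> else a - b)"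

text \<open>The dual X* of a non-trivial separated locally convex space carrying sigma(X,X*):
  a linear subspace of the algebraic dual separating points.\<close>
definition separating_dual :: "('a::real_vector \<Rightarrow> real) set \<Rightarrow> bool" where
  "separating_dual D \<longleftrightarrow> (\<forall>l\<in>D. linear l) \<and> (\<lambda>x. 0) \<in> D \<and>
     (\<forall>l\<in>D. \<forall>m\<in>D. (\<lambda>x. l x + m x) \<in> D) \<and>
     (\<forall>l\<in>D. \<forall>r::real. (\<lambda>x. r * l x) \<in> D) \<and>
     (\<forall>x. x \<noteq> 0 \<longrightarrow> (\<exists>l\<in>D. l x \<noteq> 0))"

definition proper_fun :: "('a \<Rightarrow> ereal) \<Rightarrow> bool" where
  "proper_fun f \<longleftrightarrow> (\<forall>x. f x \<noteq> -\<infinity>) \<and> (\<exists>x. f x \<noteq> \<infinity>)"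

definition convex_efun :: "('a::real_vector \<Rightarrow> ereal) \<Rightarrow> bool" where
  "convex_efun f \<longleftrightarrow> (\<forall>x y (r::real) (s::real) (u::real).
     f x \<le> ereal r \<longrightarrow> f y \<le> ereal s \<longrightarrow> 0 \<le> u \<longrightarrow> u \<le> 1 \<longrightarrow>
     f (u *\<^sub>R x + (1 - u) *\<^sub>R y) \<le> ereal (u * r + (1 - u) * s))"

definition coupling :: "'a \<Rightarrow> ('a \<Rightarrow> real) \<times> ('a \<Rightarrow> real) \<times> real \<Rightarrow> ereal" where
  "coupling x w = (case w of (xs, ys, a) \<Rightarrow> if ys x < a then ereal (xs x) else \<infinity>)"

definition Wsp :: "('a \<Rightarrow> real) set \<Rightarrow> (('a \<Rightarrow> real) \<times> ('a \<Rightarrow> real) \<times> real) set" where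
  "Wsp D = D \<times> D \<times> (UNIV :: real set)"

definition cconj :: "('a \<Rightarrow> ereal) \<Rightarrow> ('a \<Rightarrow> real) \<times> ('a \<Rightarrow> real) \<times> real \<Rightarrow> ereal" where
  "cconj \<phi> w = (SUP x. esub (coupling x w) (\<phi> x))"

definition c_subdiff :: "('a \<Rightarrow> real) set \<Rightarrow> ('a \<Rightarrow> ereal) \<Rightarrow> 'a
      \<Rightarrow> (('a \<Rightarrow> real) \<times> ('a \<Rightarrow> real) \<times> real) set" where
  "c_subdiff D g x0 = {(xs, ys, a) \<in> Wsp D. ys x0 < a \<and>
      (\<forall>x. esub (g x) (g x0) \<ge> esub (coupling x (xs, ys, a)) (coupling x0 (xs, ys, a)))}"

definition fin_nonneg :: "'t set \<Rightarrow> ('t \<Rightarrow> real) set" where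
  "fin_nonneg T = {l. (\<forall>t. l t \<ge> 0) \<and> (\<forall>t. t \<notin> T \<longrightarrow> l t = 0) \<and> finite {t. l t \<noteq> 0}}"

definition lam_comb :: "('t \<Rightarrow> real) \<Rightarrow> ('t \<Rightarrow> 'a \<Rightarrow> ereal) \<Rightarrow> 'a \<Rightarrow> ereal" where
  "lam_comb l h x = (\<Sum>t\<in>{t. l t \<noteq> 0}. ereal (l t) * h t x)"

definition feasible :: "'t set \<Rightarrow> ('t \<Rightarrow> 'a \<Rightarrow> ereal) \<Rightarrow> 'a set" where
  "feasible T h = {x. \<forall>t\<in>T. h t x \<le> 0}"

definition dc_obj :: "('a \<Rightarrow> ereal) \<Rightarrow> ('a \<Rightarrow> ereal) \<Rightarrow> 'a \<Rightarrow> ereal" where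
  "dc_obj f g x = (if f x = \<infinity> then \<infinity> else esub (f x) (g x))"

definition val_P :: "'t set \<Rightarrow> ('a \<Rightarrow> ereal) \<Rightarrow> ('a \<Rightarrow> ereal) \<Rightarrow> ('t \<Rightarrow> 'a \<Rightarrow> ereal) \<Rightarrow> ereal" where
  "val_P T f g h = (INF x\<in>feasible T h. dc_obj f g x)"

definition val_DL :: "('a \<Rightarrow> real) set \<Rightarrow> 't set \<Rightarrow> ('a \<Rightarrow> ereal) \<Rightarrow> ('a \<Rightarrow> ereal)
      \<Rightarrow> ('t \<Rightarrow> 'a \<Rightarrow> ereal) \<Rightarrow> ereal" where
  "val_DL D T f g h = (SUP l\<in>fin_nonneg T. INF w\<in>Wsp D.
       esub (cconj g w) (cconj (\<lambda>x. f x + lam_comb l h x) w))"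

end

theory Submission
  imports Defs
begin

lemma lam_nonpos:
  assumes "l \<in> fin_nonneg T" "x0 \<in> feasible T h"
  shows "lam_comb l h x0 \<le> 0"
  unfolding lam_comb_def
proof (rule sum_nonpos)
  fix t assume t: "t \<in> {t. l t \<noteq> 0}"
  then have "t \<in> T" "l t \<ge> 0" using assms(1) unfolding fin_nonneg_def by auto
  then have "h t x0 \<le> 0" using assms(2) unfolding feasible_def by auto
  then show "ereal (l t) * h t x0 \<le> 0"
    using \<open>l t \<ge> 0\<close> by (cases "h t x0") (auto simp: mult_nonneg_nonpos)
qed

lemma key:
  assumes f: "proper_fun f" and g: "proper_fun g"
    and fx: "f x0 = ereal F"
    and w: "(xs, ys, a) \<in> c_subdiff D g x0"
    and l: "l \<in> fin_nonneg T" and feas: "x0 \<in> feasible T h"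
  shows "esub (cconj g (xs, ys, a)) (cconj (\<lambda>x. f x + lam_comb l h x) (xs, ys, a))
         \<le> dc_obj f g x0"
proof -
  have lt: "ys x0 < a" and sd: "\<And>x. esub (g x) (g x0) \<ge> esub (coupling x (xs, ys, a)) (coupling x0 (xs, ys, a))"
    using w unfolding c_subdiff_def by auto
  have c0: "coupling x0 (xs, ys, a) = ereal (xs x0)" using lt by (simp add: coupling_def)
  have gninf: "\<And>x. g x \<noteq> -\<infinity>" using g unfolding proper_fun_def by auto
  have "g x0 \<noteq> \<infinity>"
  proof
    assume "g x0 = \<infinity>"
    have "esub (g x0) (g x0) = -\<infinity>" using \<open>g x0 = \<infinity>\<close> by (simp add: esub_def)
    moreover have "esub (coupling x0 (xs, ys, a)) (coupling x0 (xs, ys, a)) = 0"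
      using c0 by (simp add: esub_def)
    ultimately show False using sd[of x0] by simp
  qed
  then obtain G where gx: "g x0 = ereal G" using gninf[of x0] by (cases "g x0") auto
  have up: "cconj g (xs, ys, a) \<le> ereal (xs x0 - G)"
    unfolding cconj_def
  proof (rule SUP_least)
    fix x
    show "esub (coupling x (xs, ys, a)) (g x) \<le> ereal (xs x0 - G)"
    proof (cases "g x")
      case PInf
      then show ?thesis by (cases "coupling x (xs, ys, a)") (auto simp: esub_def)
    next
      case MInf then show ?thesis using gninf by auto
    next
      case (real gv)
      have "esub (coupling x (xs, ys, a)) (ereal (xs x0)) \<le> ereal (gv - G)"
        using sd[of x] real gx c0 by (simp add: esub_def)
      then show ?thesis using real
        by (cases "coupling x (xs, ys, a)") (auto simp: esub_def)
    qed
  qed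
  have lam: "lam_comb l h x0 \<le> 0" using lam_nonpos[OF l feas] .
  have s_le: "f x0 + lam_comb l h x0 \<le> ereal F"
    using add_mono[OF order_refl lam, of "f x0"] fx by simp
  have "esub (coupling x0 (xs, ys, a)) (f x0 + lam_comb l h x0)
        \<le> cconj (\<lambda>x. f x + lam_comb l h x) (xs, ys, a)"
    unfolding cconj_def by (rule SUP_upper) simp
  moreover have "ereal (xs x0 - F) \<le> esub (coupling x0 (xs, ys, a)) (f x0 + lam_comb l h x0)"
  proof -
    define s where "s = f x0 + lam_comb l h x0"
    have "ereal (xs x0 - F) \<le> esub (ereal (xs x0)) s"
      using s_le unfolding s_def[symmetric] by (cases s) (auto simp: esub_def)
    then show ?thesis using c0 s_def by simp
  qed
  ultimately have low: "ereal (xs x0 - F) \<le> cconj (\<lambda>x. f x + lam_comb l h x) (xs, ys, a)"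
    by (rule order_trans[rotated])
  have dc: "dc_obj f g x0 = ereal (F - G)" using fx gx by (simp add: dc_obj_def esub_def)
  show ?thesis unfolding dc using up low
    by (cases "cconj g (xs, ys, a)"; cases "cconj (\<lambda>x. f x + lam_comb l h x) (xs, ys, a)")
       (auto simp: esub_def)
qed

theorem corollary4p2:
  fixes D :: "('a::real_vector \<Rightarrow> real) set"
    and T :: "'t set"
    and f g :: "'a \<Rightarrow> ereal"
    and h :: "'t \<Rightarrow> 'a \<Rightarrow> ereal"
    and x0 :: 'a
  assumes nontriv: "\<exists>x::'a. x \<noteq> 0"
    and dual: "separating_dual D"
    and f: "proper_fun f" "convex_efun f"
    and g: "proper_fun g" "convex_efun g"
    and h: "\<forall>t\<in>T. proper_fun (h t) \<and> convex_efun (h t)"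
    and x0_feas: "x0 \<in> feasible T h"
    and x0_opt: "dc_obj f g x0 = val_P T f g h"
    and subdiff: "c_subdiff D g x0 \<noteq> {}"
  shows "val_P T f g h \<ge> val_DL D T f g h"
proof (cases "f x0 = \<infinity>")
  case True
  then show ?thesis using x0_opt by (simp add: dc_obj_def)
next
  case False
  then obtain F where fx: "f x0 = ereal F" using f(1) unfolding proper_fun_def
    by (cases "f x0") auto
  obtain xs ys a where w: "(xs, ys, a) \<in> c_subdiff D g x0" using subdiff by auto
  have wW: "(xs, ys, a) \<in> Wsp D" using w unfolding c_subdiff_def by auto
  have "val_DL D T f g h \<le> dc_obj f g x0"
    unfolding val_DL_def
  proof (rule SUP_least)
    fix l assume l: "l \<in> fin_nonneg T"
    have "(INF w\<in>Wsp D. esub (cconj g w) (cconj (\<lambda>x. f x + lam_comb l h x) w))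
       \<le> esub (cconj g (xs, ys, a)) (cconj (\<lambda>x. f x + lam_comb l h x) (xs, ys, a))"
      by (rule INF_lower[OF wW])
    also have "\<dots> \<le> dc_obj f g x0" by (rule key[OF f(1) g(1) fx w l x0_feas])
    finally show "(INF w\<in>Wsp D. esub (cconj g w) (cconj (\<lambda>x. f x + lam_comb l h x) w))
       \<le> dc_obj f g x0" .
  qed
  then show ?thesis using x0_opt by simp
qed

end
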